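(* Let $(X,d,\mu)$ be a locally doubling metric measure space, let $1\le q<p$ and $0<\tau\le1$. For each $g\in L^p_{\mathrm{loc}}(X)$ there is a Borel function $\widetilde g\in L^{p/q}_{\mathrm{loc}}(X)$ such that for every compact $K\subseteq X$ there exist $C\ge1$ and $R>0$ with $$\frac{1}{\mu(B(x,r))}\int_{B(x,r)}g^q\,d\mu\le C\,\frac{1}{\mu(B(x,\tau r))}\int_{B(x,\tau r)}\widetilde g\,d\mu$$ for every $x\in K$ and every $0<r<R$.
   Context: A metric measure space is a metric space with a Borel measure $\mu$ giving positive finite measure to nonempty open sets (the spaces here are proper: closed balls are compact). It is locally doubling if for every compact $K\subseteq X$ there are $R>0$, $C\ge1$ with $\mu(B(x,2r))\le C\mu(B(x,r))$ for every ball $B(x,r)$ with $x\in K$, $r\le R$. *)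

theory Defs
  imports "HOL-Analysis.Analysis"
begin

text \<open>Metric measure space on a proper metric space (class heine_borel: closed bounded
  sets, in particular closed balls, are compact).\<close>
definition mm_space :: "'a::heine_borel measure \<Rightarrow> bool" where
  "mm_space M \<longleftrightarrow> sets M = sets borel \<and> space M = UNIV \<and>
     (\<forall>x r. 0 < r \<longrightarrow> 0 < emeasure M (ball x r) \<and> emeasure M (ball x r) < \<infinity>)"

definition locally_doubling :: "'a::heine_borel measure \<Rightarrow> bool" where
  "locally_doubling M \<longleftrightarrow>
     (\<forall>K. compact K \<longrightarrow> (\<exists>R>0. \<exists>C\<ge>1. \<forall>x\<in>K. \<forall>r. 0 < r \<and> r \<le> R \<longrightarrow>
        measure M (ball x (2 * r)) \<le> C * measure M (ball x r)))"

definition Lp_loc :: "'a::heine_borel measure \<Rightarrow> real \<Rightarrow> ('a \<Rightarrow> real) \<Rightarrow> bool" where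
  "Lp_loc M p g \<longleftrightarrow> g \<in> borel_measurable M \<and>
     (\<forall>K. compact K \<longrightarrow> (\<integral>\<^sup>+ x. ennreal (\<bar>g x\<bar> powr p) * indicator K x \<partial>M) < \<infinity>)"

definition avg :: "'a measure \<Rightarrow> 'a set \<Rightarrow> ('a \<Rightarrow> real) \<Rightarrow> real" where
  "avg M A f = (1 / measure M A) * (LINT y:A|M. f y)"

end

theory Submission
  imports Defs
begin


lemma finite_vitali:
  fixes S :: "('a::metric_space \<times> real) set"
  assumes "finite S" "\<And>c r. (c,r) \<in> S \<Longrightarrow> 0 < r"
  shows "\<exists>T\<subseteq>S. (\<forall>p\<in>T. \<forall>p'\<in>T. p \<noteq> p' \<longrightarrow> ball (fst p) (snd p) \<inter> ball (fst p') (snd p') = {}) \<and>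
     (\<forall>p\<in>S. \<exists>p'\<in>T. ball (fst p) (snd p) \<subseteq> ball (fst p') (3 * snd p'))"
  using assms
proof (induction "card S" arbitrary: S rule: less_induct)
  case less
  show ?case
  proof (cases "S = {}")
    case True then show ?thesis by auto
  next
    case False
    obtain p0 where p0: "p0 \<in> S" "\<forall>p\<in>S. snd p \<le> snd p0"
    proof -
      have "Max (snd ` S) \<in> snd ` S" using less.prems(1) False by simp
      then obtain p0 where "p0 \<in> S" "snd p0 = Max (snd ` S)" by auto
      moreover have "\<forall>p\<in>S. snd p \<le> Max (snd ` S)" using less.prems(1) by simp
      ultimately show ?thesis using that by auto
    qed
    obtain c0 r0 where p0eq: "p0 = (c0, r0)" by (cases p0)
    have r0: "r0 > 0" using less.prems(2) p0 p0eq by auto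
    define S' where "S' = {p\<in>S. ball (fst p) (snd p) \<inter> ball c0 r0 = {}}"
    have "p0 \<notin> S'" using r0 p0eq by (auto simp: S'_def)
    hence "S' \<subset> S" using p0 by (auto simp: S'_def)
    hence cS: "card S' < card S" using less.prems(1) by (simp add: psubset_card_mono)
    obtain T' where T': "T' \<subseteq> S'"
      "\<forall>p\<in>T'. \<forall>p'\<in>T'. p \<noteq> p' \<longrightarrow> ball (fst p) (snd p) \<inter> ball (fst p') (snd p') = {}"
      "\<forall>p\<in>S'. \<exists>p'\<in>T'. ball (fst p) (snd p) \<subseteq> ball (fst p') (3 * snd p')"
    proof -
      have "finite S'" using less.prems(1) \<open>S' \<subset> S\<close> finite_subset by auto
      moreover have "\<And>c r. (c,r) \<in> S' \<Longrightarrow> 0 < r" using less.prems(2) by (auto simp: S'_def)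
      ultimately show ?thesis using less.hyps[OF cS] that by blast
    qed
    define T where "T = insert p0 T'"
    have "T \<subseteq> S" using T'(1) p0 by (auto simp: T_def S'_def)
    moreover have "\<forall>p\<in>T. \<forall>p'\<in>T. p \<noteq> p' \<longrightarrow> ball (fst p) (snd p) \<inter> ball (fst p') (snd p') = {}"
      using T'(1,2) p0eq unfolding T_def S'_def by auto
    moreover have "\<forall>p\<in>S. \<exists>p'\<in>T. ball (fst p) (snd p) \<subseteq> ball (fst p') (3 * snd p')"
    proof
      fix p assume pS: "p \<in> S"
      show "\<exists>p'\<in>T. ball (fst p) (snd p) \<subseteq> ball (fst p') (3 * snd p')"
      proof (cases "p \<in> S'")
        case True then show ?thesis using T'(3) by (auto simp: T_def)
      next
        case False
        then obtain w where w: "w \<in> ball (fst p) (snd p)" "w \<in> ball c0 r0"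
          using pS by (auto simp: S'_def)
        have rp: "snd p \<le> r0" using p0(2) pS p0eq by auto
        have "ball (fst p) (snd p) \<subseteq> ball c0 (3 * r0)"
        proof
          fix z assume z: "z \<in> ball (fst p) (snd p)"
          have "dist c0 z \<le> dist c0 w + dist w (fst p) + dist (fst p) z"
            using dist_triangle[of c0 z w] dist_triangle[of w z "fst p"] by linarith
          also have "\<dots> < r0 + snd p + snd p" using w z by (simp add: dist_commute add_strict_mono)
          finally show "z \<in> ball c0 (3 * r0)" using rp by simp
        qed
        then show ?thesis using p0eq by (auto simp: T_def)
      qed
    qed
    ultimately show ?thesis by blast
  qed
qed



lemma mm_ball_pos:
  assumes "mm_space M" "0 < r"
  shows "0 < measure M (ball x r)" "emeasure M (ball x r) = ennreal (measure M (ball x r))"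
    "ball x r \<in> sets M"
proof -
  have e: "0 < emeasure M (ball x r)" "emeasure M (ball x r) < \<infinity>"
    using assms unfolding mm_space_def by auto
  show eq: "emeasure M (ball x r) = ennreal (measure M (ball x r))"
    using e by (simp add: emeasure_eq_ennreal_measure)
  show "0 < measure M (ball x r)" using e eq by (metis ennreal_less_zero_iff)
  show "ball x r \<in> sets M" using assms unfolding mm_space_def by auto
qed

lemma mm_sets: "mm_space M \<Longrightarrow> sets M = sets borel" "mm_space M \<Longrightarrow> space M = UNIV"
  unfolding mm_space_def by auto

lemma mm_ball_mono:
  assumes "mm_space M" "0 < r'" "ball c r \<subseteq> ball c' r'"
  shows "measure M (ball c r) \<le> measure M (ball c' r')"
proof (rule measure_mono_fmeasurable)
  show "ball c' r' \<in> fmeasurable M"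
    using mm_ball_pos[OF assms(1,2)] by (auto simp: fmeasurable_def)
  show "ball c r \<in> sets M" using mm_sets[OF assms(1)] by simp
qed (fact assms(3))

lemma unif_doubling:
  fixes M :: "'a::heine_borel measure"
  assumes mm: "mm_space M" and ld: "locally_doubling M" and K: "compact C0"
  shows "\<exists>D>0. \<forall>c\<in>C0. \<forall>r. 0 < r \<and> r \<le> 1 \<longrightarrow> measure M (ball c (3*r)) \<le> D * measure M (ball c r)"
proof (cases "C0 = {}")
  case True then show ?thesis by (intro exI[of _ 1]) auto
next
  case ne: False
  obtain R C where RC: "R > 0" "C \<ge> 1"
    "\<And>x r. x \<in> C0 \<Longrightarrow> 0 < r \<Longrightarrow> r \<le> R \<Longrightarrow> measure M (ball x (2*r)) \<le> C * measure M (ball x r)"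
    using ld K unfolding locally_doubling_def by metis
  obtain a \<rho> where a: "C0 \<subseteq> cball a \<rho>"
    using compact_imp_bounded[OF K] bounded_subset_cball by blast
  define Ub where "Ub = measure M (ball a (\<rho>+4))"
  obtain F where F: "F \<subseteq> C0" "finite F" "C0 \<subseteq> (\<Union>k\<in>F. ball k (R/4))"
    using compactE_image[OF K, of C0 "\<lambda>k. ball k (R/4)"] by (metis UN_I centre_in_ball divide_pos_pos open_ball subsetI zero_less_numeral RC(1))
  have Fne: "F \<noteq> {}" using F ne by auto
  define m0 where "m0 = Min ((\<lambda>k. measure M (ball k (R/4))) ` F)"
  have m0pos: "m0 > 0" unfolding m0_def using F(2) Fne mm_ball_pos(1)[OF mm, of "R/4"] RC(1) by simp
  have m0le: "m0 \<le> measure M (ball c r)" if cC: "c \<in> C0" and rR: "R/2 < r" for c and r :: real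
  proof -
    obtain k where k: "k \<in> F" "c \<in> ball k (R/4)" using F(3) cC by blast
    have "m0 \<le> measure M (ball k (R/4))" unfolding m0_def using F(2) k(1) by simp
    also have "\<dots> \<le> measure M (ball c r)"
    proof (rule mm_ball_mono[OF mm])
      show "0 < r" using RC(1) rR by linarith
      show "ball k (R/4) \<subseteq> ball c r"
      proof
        fix z assume "z \<in> ball k (R/4)"
        then have "dist k z < R/4" by simp
        moreover have "dist k c < R/4" using k(2) by simp
        ultimately show "z \<in> ball c r" using dist_triangle[of c z k] rR by (simp add: dist_commute)
      qed
    qed
    finally show ?thesis .
  qed
  show ?thesis
  proof (intro exI[of _ "C*C + Ub/m0"] conjI ballI allI impI)
    have "Ub \<ge> 0" unfolding Ub_def by simp
    then show "0 < C*C + Ub/m0" using RC(2) m0pos by (simp add: add_pos_nonneg)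
    fix c and r :: real assume c: "c \<in> C0" and r: "0 < r \<and> r \<le> 1"
    have mr: "0 < measure M (ball c r)" using mm_ball_pos(1)[OF mm] r by simp
    show "measure M (ball c (3*r)) \<le> (C*C + Ub/m0) * measure M (ball c r)"
    proof (cases "r \<le> R/2")
      case True
      have "measure M (ball c (3*r)) \<le> measure M (ball c (2*(2*r)))"
        by (rule mm_ball_mono[OF mm]) (use r in auto)
      also have "\<dots> \<le> C * measure M (ball c (2*r))" using RC(3)[OF c, of "2*r"] True r by simp
      also have "\<dots> \<le> C * (C * measure M (ball c r))"
        using RC(3)[OF c, of r] True r RC(1,2) by (intro mult_left_mono) auto
      also have "\<dots> \<le> (C*C + Ub/m0) * measure M (ball c r)"
        using mr \<open>Ub \<ge> 0\<close> m0pos by (simp add: algebra_simps)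
      finally show ?thesis .
    next
      case False
      have "measure M (ball c (3*r)) \<le> Ub" unfolding Ub_def
      proof (rule mm_ball_mono[OF mm])
        show "0 < \<rho> + 4" using a c r by (smt (verit) mem_cball subsetD zero_le_dist)
        show "ball c (3*r) \<subseteq> ball a (\<rho>+4)"
        proof
          fix z assume "z \<in> ball c (3*r)"
          then have "dist c z < 3*r" by simp
          moreover have "dist a c \<le> \<rho>" using a c by auto
          ultimately show "z \<in> ball a (\<rho>+4)" using dist_triangle[of a z c] r by simp
        qed
      qed
      also have "\<dots> = (Ub/m0) * m0" using m0pos by simp
      also have "\<dots> \<le> (Ub/m0) * measure M (ball c r)"
        using m0le[OF c] False \<open>Ub \<ge> 0\<close> m0pos by (intro mult_left_mono) auto
      also have "\<dots> \<le> (C*C + Ub/m0) * measure M (ball c r)"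
        using mr by (intro mult_right_mono) auto
      finally show ?thesis .
    qed
  qed
qed



lemma sum_indicator_disj_le:
  fixes B :: "'p \<Rightarrow> 'a set"
  assumes "finite T" "\<forall>p\<in>T. \<forall>p'\<in>T. p \<noteq> p' \<longrightarrow> B p \<inter> B p' = {}"
  shows "(\<Sum>p\<in>T. indicator (B p) z :: ennreal) \<le> 1"
proof (cases "\<exists>p\<in>T. z \<in> B p")
  case True
  then obtain p where p: "p \<in> T" "z \<in> B p" by blast
  have "(\<Sum>p\<in>T. indicator (B p) z :: ennreal) = indicator (B p) z + (\<Sum>p'\<in>T-{p}. indicator (B p') z)"
    using assms(1) p(1) by (simp add: sum.remove)
  also have "(\<Sum>p'\<in>T-{p}. indicator (B p') z :: ennreal) = 0"
    using assms(2) p by (intro sum.neutral) (auto simp: indicator_def)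
  finally have "(\<Sum>p\<in>T. indicator (B p) z :: ennreal) = indicator (B p) z" by simp
  then show ?thesis using p(2) by simp
next
  case False
  then have "(\<Sum>p\<in>T. indicator (B p) z :: ennreal) = 0" by (intro sum.neutral) auto
  then show ?thesis by simp
qed

lemma weak_finite:
  fixes M :: "'a::heine_borel measure" and u :: "'a \<Rightarrow> real"
  assumes mm: "mm_space M" and Dpos: "D > 0"
    and dbl: "\<And>c r. c \<in> C0 \<Longrightarrow> 0 < r \<Longrightarrow> r \<le> 1 \<Longrightarrow> measure M (ball c (3*r)) \<le> D * measure M (ball c r)"
    and um: "u \<in> borel_measurable M" and unn: "\<And>z. 0 \<le> u z" and Lpos: "0 < L"
    and S: "finite S" "S \<subseteq> {(c,r). c \<in> C0 \<and> 0 < r \<and> r \<le> 1 \<and>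
          ennreal L * emeasure M (ball c r) < (\<integral>\<^sup>+ z. ennreal (u z) * indicator (ball c r) z \<partial>M)}"
  shows "emeasure M (\<Union>p\<in>S. ball (fst p) (snd p)) \<le> ennreal (D/L) * (\<integral>\<^sup>+ z. ennreal (u z) \<partial>M)"
proof -
  have sM: "sets M = sets borel" and spM: "space M = UNIV" using mm_sets[OF mm] by auto
  have pos: "\<And>c r. (c,r) \<in> S \<Longrightarrow> 0 < r" using S(2) by auto
  have ballM: "\<And>c r. ball c r \<in> sets M" using sM by simp
  have uiM: "\<And>c r. (\<lambda>z. ennreal (u z) * indicator (ball c r) z) \<in> borel_measurable M"
    using um ballM by (intro borel_measurable_times_ennreal) auto
  obtain T where T: "T \<subseteq> S" "\<forall>p\<in>T. \<forall>p'\<in>T. p \<noteq> p' \<longrightarrow> ball (fst p) (snd p) \<inter> ball (fst p') (snd p') = {}"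
    "\<forall>p\<in>S. \<exists>p'\<in>T. ball (fst p) (snd p) \<subseteq> ball (fst p') (3 * snd p')"
  proof -
    have ex: "\<exists>T\<subseteq>S. (\<forall>p\<in>T. \<forall>p'\<in>T. p \<noteq> p' \<longrightarrow> ball (fst p) (snd p) \<inter> ball (fst p') (snd p') = {}) \<and>
     (\<forall>p\<in>S. \<exists>p'\<in>T. ball (fst p) (snd p) \<subseteq> ball (fst p') (3 * snd p'))"
      using finite_vitali[of S] S(1) pos by presburger
    from ex obtain T where "T \<subseteq> S \<and> (\<forall>p\<in>T. \<forall>p'\<in>T. p \<noteq> p' \<longrightarrow> ball (fst p) (snd p) \<inter> ball (fst p') (snd p') = {}) \<and>
     (\<forall>p\<in>S. \<exists>p'\<in>T. ball (fst p) (snd p) \<subseteq> ball (fst p') (3 * snd p'))" by (elim exE)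
    then show ?thesis using that by (elim conjE)
  qed
  have fT: "finite T" using T(1) S(1) finite_subset by blast
  have inner: "(\<Sum>p\<in>T. (\<integral>\<^sup>+ z. ennreal (u z) * indicator (ball (fst p) (snd p)) z \<partial>M)) \<le> (\<integral>\<^sup>+ z. ennreal (u z) \<partial>M)"
  proof -
    have "(\<Sum>p\<in>T. (\<integral>\<^sup>+ z. ennreal (u z) * indicator (ball (fst p) (snd p)) z \<partial>M))
      = (\<integral>\<^sup>+ z. (\<Sum>p\<in>T. ennreal (u z) * indicator (ball (fst p) (snd p)) z) \<partial>M)"
      by (rule nn_integral_sum[symmetric]) (use uiM in auto)
    also have "\<dots> \<le> (\<integral>\<^sup>+ z. ennreal (u z) \<partial>M)"
    proof (rule nn_integral_mono)
      fix z
      have "(\<Sum>p\<in>T. ennreal (u z) * indicator (ball (fst p) (snd p)) z) = ennreal (u z) * (\<Sum>p\<in>T. indicator (ball (fst p) (snd p)) z)"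
        by (simp add: sum_distrib_left)
      also have "\<dots> \<le> ennreal (u z) * 1"
        by (intro mult_left_mono sum_indicator_disj_le[OF fT]) (use T(2) in auto)
      finally show "(\<Sum>p\<in>T. ennreal (u z) * indicator (ball (fst p) (snd p)) z) \<le> ennreal (u z)" by simp
    qed
    finally show ?thesis .
  qed
  have "emeasure M (\<Union>p\<in>S. ball (fst p) (snd p)) \<le> emeasure M (\<Union>p\<in>T. ball (fst p) (3 * snd p))"
  proof (rule emeasure_mono)
    show "(\<Union>p\<in>S. ball (fst p) (snd p)) \<subseteq> (\<Union>p\<in>T. ball (fst p) (3 * snd p))"
    proof
      fix z assume "z \<in> (\<Union>p\<in>S. ball (fst p) (snd p))"
      then obtain p where p: "p \<in> S" "z \<in> ball (fst p) (snd p)" by auto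
      obtain p' where p': "p' \<in> T" "ball (fst p) (snd p) \<subseteq> ball (fst p') (3 * snd p')" using T(3) p(1) by auto
      have "z \<in> ball (fst p') (3 * snd p')" using p(2) p'(2) by (rule subsetD[rotated])
      then show "z \<in> (\<Union>p\<in>T. ball (fst p) (3 * snd p))" using p'(1) by (rule UN_I[rotated])
    qed
    show "(\<Union>p\<in>T. ball (fst p) (3 * snd p)) \<in> sets M" unfolding sM by (intro borel_open open_UN) simp
  qed
  also have "\<dots> \<le> (\<Sum>p\<in>T. emeasure M (ball (fst p) (3 * snd p)))"
    by (rule emeasure_subadditive_finite[OF fT]) (use ballM in blast)
  also have "\<dots> \<le> (\<Sum>p\<in>T. ennreal (D/L) * (\<integral>\<^sup>+ z. ennreal (u z) * indicator (ball (fst p) (snd p)) z \<partial>M))"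
  proof (rule sum_mono)
    fix p assume pT: "p \<in> T"
    obtain c r where p: "p = (c,r)" by (cases p)
    have cS: "(c,r) \<in> S" using pT T(1) p by auto
    have c: "c \<in> C0" "0 < r" "r \<le> 1"
      and lt: "ennreal L * emeasure M (ball c r) < (\<integral>\<^sup>+ z. ennreal (u z) * indicator (ball c r) z \<partial>M)"
      using subsetD[OF S(2) cS] by simp_all
    have "emeasure M (ball c (3*r)) = ennreal (measure M (ball c (3*r)))"
      using mm_ball_pos(2)[OF mm] c by simp
    also have "\<dots> \<le> ennreal (D * measure M (ball c r))" using dbl[OF c] by (rule ennreal_leI)
    also have "\<dots> = ennreal (D/L) * (ennreal L * emeasure M (ball c r))"
    proof -
      have e1: "ennreal (D/L) * ennreal L = ennreal D" using Dpos Lpos by (simp add: ennreal_mult[symmetric])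
      have "ennreal (D/L) * (ennreal L * emeasure M (ball c r)) = ennreal D * emeasure M (ball c r)"
        by (simp add: mult.assoc[symmetric] e1)
      also have "\<dots> = ennreal (D * measure M (ball c r))"
        using mm_ball_pos(2)[OF mm c(2)] Dpos by (simp add: ennreal_mult)
      finally show ?thesis by simp
    qed
    also have "\<dots> \<le> ennreal (D/L) * (\<integral>\<^sup>+ z. ennreal (u z) * indicator (ball c r) z \<partial>M)"
      using lt by (intro mult_left_mono) auto
    finally show "emeasure M (ball (fst p) (3 * snd p)) \<le> ennreal (D/L) * (\<integral>\<^sup>+ z. ennreal (u z) * indicator (ball (fst p) (snd p)) z \<partial>M)"
      using p by simp
  qed
  also have "\<dots> = ennreal (D/L) * (\<Sum>p\<in>T. (\<integral>\<^sup>+ z. ennreal (u z) * indicator (ball (fst p) (snd p)) z \<partial>M))"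
    by (simp add: sum_distrib_left)
  also have "\<dots> \<le> ennreal (D/L) * (\<integral>\<^sup>+ z. ennreal (u z) \<partial>M)"
    using inner by (rule mult_left_mono) simp
  finally show ?thesis .
qed



lemma weak_open:
  fixes M :: "'a::heine_borel measure" and u :: "'a \<Rightarrow> real"
  assumes mm: "mm_space M" and Dpos: "D > 0"
    and dbl: "\<And>c r. c \<in> C0 \<Longrightarrow> 0 < r \<Longrightarrow> r \<le> 1 \<Longrightarrow> measure M (ball c (3*r)) \<le> D * measure M (ball c r)"
    and um: "u \<in> borel_measurable M" and unn: "\<And>z. 0 \<le> u z" and Lpos: "0 < L"
    and P: "P = {(c,r). c \<in> C0 \<and> 0 < r \<and> r \<le> 1 \<and>
          ennreal L * emeasure M (ball c r) < (\<integral>\<^sup>+ z. ennreal (u z) * indicator (ball c r) z \<partial>M)}"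
  shows "emeasure M (\<Union>p\<in>P. ball (fst p) (snd p)) \<le> ennreal (D/L) * (\<integral>\<^sup>+ z. ennreal (u z) \<partial>M)"
proof -
  have sM: "sets M = sets borel" using mm_sets[OF mm] by auto
  define U where "U = (\<Union>p\<in>P. ball (fst p) (snd p))"
  have oU: "open U" unfolding U_def by (intro open_UN) simp
  define a :: 'a where "a = undefined"
  define K where "K n = cball a (real n) \<inter> (\<Inter>z\<in>-U. - ball z (1 / real (Suc n)))" for n
  have cK: "compact (K n)" for n
    unfolding K_def by (intro compact_Int_closed compact_cball closed_INT) (simp add: closed_Compl)
  have KU: "K n \<subseteq> U" for n
  proof
    fix y assume y: "y \<in> K n"
    show "y \<in> U"
    proof (rule ccontr)
      assume "y \<notin> U"
      then have "y \<in> - ball y (1 / real (Suc n))" using y unfolding K_def by blast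
      then show False by simp
    qed
  qed
  have bnd: "emeasure M (K n) \<le> ennreal (D/L) * (\<integral>\<^sup>+ z. ennreal (u z) \<partial>M)" for n
  proof -
    have "K n \<subseteq> (\<Union>p\<in>P. ball (fst p) (snd p))" using KU[of n] unfolding U_def .
    then obtain C' where C': "C' \<subseteq> P" "finite C'" "K n \<subseteq> (\<Union>p\<in>C'. ball (fst p) (snd p))"
      using compactE_image[OF cK[of n], of P "\<lambda>p. ball (fst p) (snd p)"] by auto
    have "emeasure M (K n) \<le> emeasure M (\<Union>p\<in>C'. ball (fst p) (snd p))"
      by (rule emeasure_mono[OF C'(3)]) (unfold sM, intro borel_open open_UN, simp)
    also have "\<dots> \<le> ennreal (D/L) * (\<integral>\<^sup>+ z. ennreal (u z) \<partial>M)"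
      by (rule weak_finite[OF mm Dpos dbl um unn Lpos C'(2)]) (use C'(1) P in auto)
    finally show ?thesis .
  qed
  have incK: "incseq K"
  proof (rule incseq_SucI)
    fix n
    have "1 / real (Suc (Suc n)) \<le> 1 / real (Suc n)" by (simp add: frac_le)
    then have "- ball z (1 / real (Suc n)) \<subseteq> - ball z (1 / real (Suc (Suc n)))" for z
      by auto
    moreover have "cball a (real n) \<subseteq> cball a (real (Suc n))" by auto
    ultimately show "K n \<subseteq> K (Suc n)" unfolding K_def by blast
  qed
  have UK: "U \<subseteq> (\<Union>n. K n)"
  proof
    fix y assume "y \<in> U"
    then obtain e where e: "e > 0" "ball y e \<subseteq> U" using oU open_contains_ball by blast
    define n where "n = nat \<lceil>max (dist a y) (1/e)\<rceil>"
    have n1: "dist a y \<le> real n" unfolding n_def by linarith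
    have n2: "1/e \<le> real n" unfolding n_def by linarith
    have "1 / real (Suc n) < e"
    proof -
      have "1/e < real (Suc n)" using n2 by simp
      then show ?thesis using e(1) by (simp add: divide_less_eq mult.commute)
    qed
    have "y \<in> K n" unfolding K_def
    proof (intro IntI INT_I ComplI)
      show "y \<in> cball a (real n)" using n1 by simp
      fix z assume z: "z \<in> - U" and "y \<in> ball z (1 / real (Suc n))"
      then have "dist y z < e" using \<open>1 / real (Suc n) < e\<close> by (simp add: dist_commute)
      then have "z \<in> U" using e(2) by auto
      then show False using z by simp
    qed
    then show "y \<in> (\<Union>n. K n)" by blast
  qed
  have "U = (\<Union>n. K n)" using UK KU by blast
  then have "emeasure M U = (SUP n. emeasure M (K n))"
  proof -
    have "range K \<subseteq> sets M" using cK by (auto simp: sM compact_imp_closed)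
    from SUP_emeasure_incseq[OF this incK] \<open>U = (\<Union>n. K n)\<close> show ?thesis by simp
  qed
  also have "\<dots> \<le> ennreal (D/L) * (\<integral>\<^sup>+ z. ennreal (u z) \<partial>M)"
    by (rule SUP_least) (rule bnd)
  finally show ?thesis unfolding U_def .
qed



definition avgN :: "'a::metric_space measure \<Rightarrow> ('a \<Rightarrow> real) \<Rightarrow> 'a \<Rightarrow> real \<Rightarrow> ennreal" where
  "avgN M u c r = (\<integral>\<^sup>+ z. ennreal (u z) * indicator (ball c r) z \<partial>M) * ennreal (1 / measure M (ball c r))"

definition maxf :: "'a::metric_space measure \<Rightarrow> ('a \<Rightarrow> real) \<Rightarrow> 'a set \<Rightarrow> 'a \<Rightarrow> ennreal" where
  "maxf M u C0 y = (SUP p \<in> {p. fst p \<in> C0 \<and> 0 < snd p \<and> snd p \<le> 1 \<and> y \<in> ball (fst p) (snd p)}. avgN M u (fst p) (snd p))"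

lemma maxf_ge: "c \<in> C0 \<Longrightarrow> 0 < r \<Longrightarrow> r \<le> 1 \<Longrightarrow> y \<in> ball c r \<Longrightarrow> avgN M u c r \<le> maxf M u C0 y"
  unfolding maxf_def by (rule SUP_upper2[of "(c,r)"]) auto

lemma maxf_open: "open {y. t < maxf M u C0 y}"
proof -
  have "{y. t < maxf M u C0 y} = (\<Union>p\<in>{p. fst p \<in> C0 \<and> 0 < snd p \<and> snd p \<le> 1 \<and> t < avgN M u (fst p) (snd p)}. ball (fst p) (snd p))"
    unfolding maxf_def less_SUP_iff by blast
  then show ?thesis by (simp add: open_UN)
qed

lemma maxf_meas: "maxf M u C0 \<in> borel_measurable borel"
  by (rule borel_measurableI_greater) (simp add: borel_open maxf_open)

lemma maxf_weak:
  fixes M :: "'a::heine_borel measure" and h :: "'a \<Rightarrow> real"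
  assumes mm: "mm_space M" and Dpos: "D > 0"
    and dbl: "\<And>c r. c \<in> C0 \<Longrightarrow> 0 < r \<Longrightarrow> r \<le> 1 \<Longrightarrow> measure M (ball c (3*r)) \<le> D * measure M (ball c r)"
    and hm: "h \<in> borel_measurable M" and hnn: "\<And>z. 0 \<le> h z" and tpos: "0 < t"
  shows "emeasure M {y. ennreal t < maxf M h C0 y}
     \<le> ennreal (D/(t/2)) * (\<integral>\<^sup>+ z. ennreal (if t/2 < h z then h z else 0) \<partial>M)"
proof -
  have sM: "sets M = sets borel" using mm_sets[OF mm] by auto
  define h1 where "h1 z = (if t/2 < h z then h z else 0)" for z
  have h1m: "h1 \<in> borel_measurable M" unfolding h1_def using hm by measurable
  have h1nn: "0 \<le> h1 z" for z unfolding h1_def using hnn by simp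
  define P where "P = {(c,r). c \<in> C0 \<and> 0 < r \<and> r \<le> 1 \<and>
          ennreal (t/2) * emeasure M (ball c r) < (\<integral>\<^sup>+ z. ennreal (h1 z) * indicator (ball c r) z \<partial>M)}"
  have sub: "{y. ennreal t < maxf M h C0 y} \<subseteq> (\<Union>p\<in>P. ball (fst p) (snd p))"
  proof
    fix y assume "y \<in> {y. ennreal t < maxf M h C0 y}"
    then obtain c r where cr: "c \<in> C0" "0 < r" "r \<le> 1" "y \<in> ball c r" and lt: "ennreal t < avgN M h c r"
      unfolding maxf_def less_SUP_iff by auto
    define m where "m = measure M (ball c r)"
    have m: "0 < m" "emeasure M (ball c r) = ennreal m" using mm_ball_pos[OF mm cr(2)] unfolding m_def by auto
    have bM: "ball c r \<in> sets M" using sM by simp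
    define I where "I u = (\<integral>\<^sup>+ z. ennreal (u z) * indicator (ball c r) z \<partial>M)" for u
    have "ennreal t * ennreal m < avgN M h c r * ennreal m"
      using lt m(1) by (intro ennreal_mult_strict_right_mono) auto
    also have "avgN M h c r * ennreal m = I h * ennreal (1/m * m)"
      unfolding avgN_def I_def m_def[symmetric] using m(1)
      by (simp add: mult.assoc ennreal_mult[symmetric])
    also have "\<dots> = I h" using m(1) by simp
    finally have A: "ennreal t * ennreal m < I h" .
    have B: "I h \<le> I h1 + ennreal (t/2) * ennreal m"
    proof -
      have "I h \<le> (\<integral>\<^sup>+ z. ennreal (h1 z) * indicator (ball c r) z + ennreal (t/2) * indicator (ball c r) z \<partial>M)"
        unfolding I_def
      proof (rule nn_integral_mono)
        fix z
        have "ennreal (h z) \<le> ennreal (h1 z) + ennreal (t/2)"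
        proof (cases "t/2 < h z")
          case True then show ?thesis unfolding h1_def by (simp add: add_increasing2)
        next
          case False then show ?thesis unfolding h1_def by (simp add: ennreal_leI)
        qed
        then show "ennreal (h z) * indicator (ball c r) z \<le> ennreal (h1 z) * indicator (ball c r) z + ennreal (t/2) * indicator (ball c r) z"
          by (auto simp: indicator_def)
      qed
      also have "\<dots> = I h1 + ennreal (t/2) * ennreal m"
        unfolding I_def using h1m bM m(2)
        by (subst nn_integral_add) (auto simp: nn_integral_cmult_indicator)
      finally show ?thesis .
    qed
    have t2: "ennreal t = ennreal (t/2) + ennreal (t/2)"
      using ennreal_plus[of "t/2" "t/2"] tpos by simp
    have tt: "ennreal t * ennreal m = ennreal (t/2) * ennreal m + ennreal (t/2) * ennreal m"
      by (subst t2) (rule distrib_right)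
    have "ennreal (t/2) * ennreal m + ennreal (t/2) * ennreal m < ennreal (t/2) * ennreal m + I h1"
    proof -
      have "ennreal (t/2) * ennreal m + ennreal (t/2) * ennreal m < I h" using A tt by simp
      also have "I h \<le> ennreal (t/2) * ennreal m + I h1" using B by (simp add: add.commute)
      finally show ?thesis .
    qed
    then have "ennreal (t/2) * ennreal m < I h1"
      by (simp add: ennreal_add_left_cancel_less ennreal_mult_eq_top_iff)
    then have "(c,r) \<in> P" unfolding P_def I_def using cr m(2) by simp
    then show "y \<in> (\<Union>p\<in>P. ball (fst p) (snd p))" using cr(4) by force
  qed
  have "emeasure M {y. ennreal t < maxf M h C0 y} \<le> emeasure M (\<Union>p\<in>P. ball (fst p) (snd p))"
    by (rule emeasure_mono[OF sub]) (unfold sM, intro borel_open open_UN, simp)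
  also have "\<dots> \<le> ennreal (D/(t/2)) * (\<integral>\<^sup>+ z. ennreal (h1 z) \<partial>M)"
    by (rule weak_open[OF mm Dpos dbl h1m h1nn _ P_def]) (use tpos in auto)
  finally show ?thesis unfolding h1_def .
qed



lemma int_pow_eq:
  fixes a e :: real
  assumes "0 \<le> a" "-1 < e"
  shows "(\<integral>\<^sup>+ t. ennreal (t powr e) * indicator {0<..<a} t \<partial>lborel) = ennreal (a powr (e+1) / (e+1))"
proof -
  have hi: "((\<lambda>t. t powr e) has_integral (a powr (e+1) / (e+1))) {0..a}"
    by (rule has_integral_powr_from_0) (use assms in auto)
  have eq1: "(\<integral>\<^sup>+ t. ennreal (indicator {0..a} t * t powr e) \<partial>lborel) = ennreal (a powr (e+1) / (e+1))"
    using nn_integral_has_integral_lebesgue[OF _ hi] by simp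
  have "(\<integral>\<^sup>+ t. ennreal (t powr e) * indicator {0<..<a} t \<partial>lborel) = (\<integral>\<^sup>+ t. ennreal (indicator {0..a} t * t powr e) \<partial>lborel)"
  proof (rule nn_integral_cong_AE)
    show "AE t in lborel. ennreal (t powr e) * indicator {0<..<a} t = ennreal (indicator {0..a} t * t powr e)"
      using AE_lborel_singleton[of 0] AE_lborel_singleton[of a]
      by eventually_elim (auto simp: indicator_def)
  qed
  then show ?thesis using eq1 by simp
qed



lemma mm_sigma_finite:
  fixes M :: "'a::heine_borel measure"
  assumes mm: "mm_space M"
  shows "sigma_finite_measure M"
  unfolding sigma_finite_measure_def
proof (intro exI[of _ "range (\<lambda>n. ball (undefined::'a) (real (Suc n)))"] conjI ballI)
  show "countable (range (\<lambda>n. ball (undefined::'a) (real (Suc n))))" by simp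
  show "range (\<lambda>n. ball (undefined::'a) (real (Suc n))) \<subseteq> sets M" using mm_sets[OF mm] by auto
  show "\<Union> (range (\<lambda>n. ball (undefined::'a) (real (Suc n)))) = space M"
  proof -
    have "y \<in> (\<Union>n. ball (undefined::'a) (real (Suc n)))" for y
    proof -
      have "dist undefined y < real (Suc (nat \<lceil>dist (undefined::'a) y\<rceil>))" by linarith
      then have "y \<in> ball (undefined::'a) (real (Suc (nat \<lceil>dist (undefined::'a) y\<rceil>)))" by simp
      then show ?thesis by (rule UN_I[rotated]) simp
    qed
    then show ?thesis using mm_sets(2)[OF mm] by auto
  qed
  fix A assume "A \<in> range (\<lambda>n. ball (undefined::'a) (real (Suc n)))"
  then obtain n where "A = ball undefined (real (Suc n))" by auto
  then show "emeasure M A \<noteq> \<infinity>" using mm_ball_pos(2)[OF mm, of "real (Suc n)"] by simp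
qed

lemma powr_split: "0 < (t::real) \<Longrightarrow> t powr (s-1) = t powr (s-2) * t"
  using powr_add[of t "s-2" 1] by simp

lemma hpowr: "0 \<le> (x::real) \<Longrightarrow> 0 < s \<Longrightarrow> x * x powr (s-1) = x powr s"
proof (cases "x = 0")
  case False
  assume "0 \<le> x"
  then have "0 < x" using False by simp
  then show ?thesis using powr_add[of x 1 "s-1"] by simp
qed simp

lemma maxf_strong:
  fixes M :: "'a::heine_borel measure" and h :: "'a \<Rightarrow> real"
  assumes mm: "mm_space M" and Dpos: "D > 0"
    and dbl: "\<And>c r. c \<in> C0 \<Longrightarrow> 0 < r \<Longrightarrow> r \<le> 1 \<Longrightarrow> measure M (ball c (3*r)) \<le> D * measure M (ball c r)"
    and hm: "h \<in> borel_measurable M" and hnn: "\<And>z. 0 \<le> h z" and s1: "1 < s"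
    and hs: "(\<integral>\<^sup>+ z. ennreal (h z powr s) \<partial>M) < \<infinity>"
  shows "(\<integral>\<^sup>+ y. (\<integral>\<^sup>+ t. (if 0 < t \<and> ennreal t < maxf M h C0 y then ennreal (s * t powr (s-1)) else 0) \<partial>lborel) \<partial>M) < \<infinity>"
proof -
  have sM: "sets M = sets borel" and spM: "space M = UNIV" using mm_sets[OF mm] by auto
  interpret sigma_finite_measure M using mm_sigma_finite[OF mm] .
  interpret P: pair_sigma_finite lborel M
    unfolding pair_sigma_finite_def using mm_sigma_finite[OF mm] sigma_finite_lborel by simp
  define Hm where "Hm = maxf M h C0"
  have Hmm[measurable]: "Hm \<in> borel_measurable M"
    unfolding Hm_def by (subst measurable_cong_sets[OF sM refl]) (rule maxf_meas)
  note hm[measurable]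
  define f where "f t y = (if 0 < t \<and> ennreal t < Hm y then ennreal (s * t powr (s-1)) else 0)" for t y
  define k where "k t y = (if 0 < t \<and> t < 2 * h y then ennreal (2 * D * s * t powr (s-2) * h y) else 0)" for t y
  have fm: "case_prod f \<in> borel_measurable (lborel \<Otimes>\<^sub>M M)" unfolding f_def by measurable
  have km: "case_prod k \<in> borel_measurable (lborel \<Otimes>\<^sub>M M)" unfolding k_def by measurable
  have step1: "(\<integral>\<^sup>+ y. (\<integral>\<^sup>+ t. f t y \<partial>lborel) \<partial>M) = (\<integral>\<^sup>+ t. (\<integral>\<^sup>+ y. f t y \<partial>M) \<partial>lborel)"
    by (rule P.Fubini'[OF fm])
  have step2: "(\<integral>\<^sup>+ y. f t y \<partial>M) \<le> (\<integral>\<^sup>+ y. k t y \<partial>M)" for t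
  proof (cases "0 < t")
    case False then show ?thesis unfolding f_def by simp
  next
    case tpos: True
    have setM: "{y. ennreal t < Hm y} \<in> sets M"
    proof -
      have "{y \<in> space M. ennreal t < Hm y} \<in> sets M" by measurable
      then show ?thesis using spM by simp
    qed
    have "(\<integral>\<^sup>+ y. f t y \<partial>M) = (\<integral>\<^sup>+ y. ennreal (s * t powr (s-1)) * indicator {y. ennreal t < Hm y} y \<partial>M)"
      unfolding f_def using tpos by (intro nn_integral_cong) (simp add: indicator_def)
    also have "\<dots> = ennreal (s * t powr (s-1)) * emeasure M {y. ennreal t < Hm y}"
      by (rule nn_integral_cmult_indicator[OF setM])
    also have "\<dots> \<le> ennreal (s * t powr (s-1)) * (ennreal (D/(t/2)) * (\<integral>\<^sup>+ z. ennreal (if t/2 < h z then h z else 0) \<partial>M))"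
      unfolding Hm_def by (intro mult_left_mono maxf_weak[OF mm Dpos dbl hm hnn tpos]) auto
    also have "\<dots> = (ennreal (s * t powr (s-1)) * ennreal (D/(t/2))) * (\<integral>\<^sup>+ z. ennreal (if t/2 < h z then h z else 0) \<partial>M)"
      by (simp add: mult.assoc)
    also have "\<dots> = (\<integral>\<^sup>+ z. ennreal (s * t powr (s-1)) * ennreal (D/(t/2)) * ennreal (if t/2 < h z then h z else 0) \<partial>M)"
      by (rule nn_integral_cmult[symmetric]) measurable
    also have "\<dots> = (\<integral>\<^sup>+ z. k t z \<partial>M)"
    proof (rule nn_integral_cong)
      fix z
      show "ennreal (s * t powr (s-1)) * ennreal (D/(t/2)) * ennreal (if t/2 < h z then h z else 0) = k t z"
      proof (cases "t/2 < h z")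
        case True
        have "ennreal (s * t powr (s-1)) * ennreal (D/(t/2)) * ennreal (h z) = ennreal (s * t powr (s-1) * (D/(t/2)) * h z)"
        proof -
          have a: "0 \<le> s * t powr (s-1)" using s1 by simp
          have b: "0 \<le> D/(t/2)" using Dpos tpos by simp
          show ?thesis by (simp only: ennreal_mult[OF mult_nonneg_nonneg[OF a b] hnn[of z]] ennreal_mult[OF a b])
        qed
        also have "s * t powr (s-1) * (D/(t/2)) * h z = 2 * D * s * t powr (s-2) * h z"
          using tpos by (simp add: powr_split field_simps)
        finally show ?thesis using True unfolding k_def using tpos by simp
      next
        case False then show ?thesis unfolding k_def by simp
      qed
    qed
    finally show ?thesis .
  qed
  have step3: "(\<integral>\<^sup>+ t. (\<integral>\<^sup>+ y. k t y \<partial>M) \<partial>lborel) = (\<integral>\<^sup>+ y. (\<integral>\<^sup>+ t. k t y \<partial>lborel) \<partial>M)"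
    by (rule P.Fubini'[OF km, symmetric])
  define C1 where "C1 = 2 * D * s * (2 powr (s-1) / (s-1))"
  have step4: "(\<integral>\<^sup>+ t. k t y \<partial>lborel) = ennreal (C1 * h y powr s)" for y
  proof -
    have "(\<integral>\<^sup>+ t. k t y \<partial>lborel) = (\<integral>\<^sup>+ t. ennreal (2 * D * s * h y) * (ennreal (t powr (s-2)) * indicator {0<..<2 * h y} t) \<partial>lborel)"
      unfolding k_def using Dpos s1 hnn[of y]
      by (intro nn_integral_cong) (auto simp: indicator_def ennreal_mult[symmetric] mult_ac)
    also have "\<dots> = ennreal (2 * D * s * h y) * (\<integral>\<^sup>+ t. ennreal (t powr (s-2)) * indicator {0<..<2 * h y} t \<partial>lborel)"
      by (rule nn_integral_cmult) measurable
    also have "\<dots> = ennreal (2 * D * s * h y) * ennreal ((2 * h y) powr (s-1) / (s-1))"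
    proof -
      have e21: "s-2+1 = s-1" by simp
      show ?thesis using int_pow_eq[of "2 * h y" "s-2"] hnn[of y] s1 unfolding e21 by simp
    qed
    also have "\<dots> = ennreal (2 * D * s * h y * ((2 * h y) powr (s-1) / (s-1)))"
    proof -
      have a: "0 \<le> 2 * D * s * h y" using Dpos s1 hnn[of y] by simp
      have b: "0 \<le> (2 * h y) powr (s-1) / (s-1)" using s1 by simp
      show ?thesis by (simp only: ennreal_mult[OF a b])
    qed
    also have "2 * D * s * h y * ((2 * h y) powr (s-1) / (s-1)) = C1 * (h y * h y powr (s-1))"
      unfolding C1_def using hnn[of y] by (simp add: powr_mult field_simps)
    also have "h y * h y powr (s-1) = h y powr s" using hpowr[OF hnn[of y]] s1 by simp
    finally show ?thesis .
  qed
  have "(\<integral>\<^sup>+ y. (\<integral>\<^sup>+ t. f t y \<partial>lborel) \<partial>M) \<le> (\<integral>\<^sup>+ t. (\<integral>\<^sup>+ y. k t y \<partial>M) \<partial>lborel)"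
    unfolding step1 by (intro nn_integral_mono step2)
  also have "\<dots> = (\<integral>\<^sup>+ y. ennreal (C1 * h y powr s) \<partial>M)" unfolding step3 step4 ..
  also have "\<dots> = ennreal C1 * (\<integral>\<^sup>+ y. ennreal (h y powr s) \<partial>M)"
  proof -
    have C1: "0 \<le> C1" unfolding C1_def using Dpos s1 by simp
    have "(\<integral>\<^sup>+ y. ennreal (C1 * h y powr s) \<partial>M) = (\<integral>\<^sup>+ y. ennreal C1 * ennreal (h y powr s) \<partial>M)"
      by (intro nn_integral_cong) (simp only: ennreal_mult[OF C1 powr_ge_zero])
    also have "\<dots> = ennreal C1 * (\<integral>\<^sup>+ y. ennreal (h y powr s) \<partial>M)"
      by (rule nn_integral_cmult) measurable
    finally show ?thesis .
  qed
  also have "\<dots> < \<infinity>" using hs by (simp add: ennreal_mult_less_top)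
  finally show ?thesis unfolding f_def Hm_def .
qed



lemma int_pow_s:
  fixes a s :: real
  assumes "0 \<le> a" "0 < s"
  shows "(\<integral>\<^sup>+ t. ennreal (s * t powr (s-1)) * indicator {0<..<a} t \<partial>lborel) = ennreal (a powr s)"
proof -
  have "(\<integral>\<^sup>+ t. ennreal (s * t powr (s-1)) * indicator {0<..<a} t \<partial>lborel)
      = (\<integral>\<^sup>+ t. ennreal s * (ennreal (t powr (s-1)) * indicator {0<..<a} t) \<partial>lborel)"
    using assms by (intro nn_integral_cong) (simp add: ennreal_mult mult.assoc)
  also have "\<dots> = ennreal s * (\<integral>\<^sup>+ t. ennreal (t powr (s-1)) * indicator {0<..<a} t \<partial>lborel)"
    by (rule nn_integral_cmult) measurable
  also have "\<dots> = ennreal s * ennreal (a powr s / s)"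
    using int_pow_eq[of a "s-1"] assms by simp
  also have "\<dots> = ennreal (a powr s)"
    using assms by (simp add: ennreal_mult[symmetric])
  finally show ?thesis .
qed

lemma le_powr_self: "1 \<le> (x::real) \<Longrightarrow> 1 \<le> s \<Longrightarrow> x \<le> x powr s"
  using powr_mono[of 1 s x] by simp

lemma loc:
  fixes M :: "'a::heine_borel measure" and g :: "'a \<Rightarrow> real"
  assumes mm: "mm_space M" and ld: "locally_doubling M" and q1: "1 \<le> q" and qp: "q < p"
    and gL: "Lp_loc M p g" and K: "compact K"
  shows "(\<integral>\<^sup>+ y. ennreal (enn2real (maxf M (\<lambda>y. \<bar>g y\<bar> powr q) UNIV y) powr (p/q)) * indicator K y \<partial>M) < \<infinity>"
    "AE y in M. y \<in> K \<longrightarrow> maxf M (\<lambda>y. \<bar>g y\<bar> powr q) UNIV y < \<infinity>"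
proof -
  define s where "s = p/q"
  have s1: "1 < s" unfolding s_def using q1 qp by simp
  have sM: "sets M = sets borel" and spM: "space M = UNIV" using mm_sets[OF mm] by auto
  define f where "f y = \<bar>g y\<bar> powr q" for y
  have gm: "g \<in> borel_measurable M" using gL unfolding Lp_loc_def by simp
  note gm[measurable]
  define G where "G = maxf M f UNIV"
  obtain a \<rho> where a: "K \<subseteq> cball a \<rho>"
    using compact_imp_bounded[OF K] bounded_subset_cball by blast
  define C0 where "C0 = cball a (\<rho>+1)"
  define L where "L = cball a (\<rho>+2)"
  define h where "h z = f z * indicator L z" for z
  have LM[measurable]: "L \<in> sets M" by (simp add: sM L_def)
  have hm: "h \<in> borel_measurable M" unfolding h_def f_def by measurable
  have hnn: "0 \<le> h z" for z unfolding h_def f_def by simp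
  obtain D where D: "D > 0" "\<forall>c\<in>C0. \<forall>r. 0 < r \<and> r \<le> 1 \<longrightarrow> measure M (ball c (3*r)) \<le> D * measure M (ball c r)"
    using unif_doubling[OF mm ld] unfolding C0_def by (meson compact_cball)
  have dbl: "\<And>c r. c \<in> C0 \<Longrightarrow> 0 < r \<Longrightarrow> r \<le> 1 \<Longrightarrow> measure M (ball c (3*r)) \<le> D * measure M (ball c r)"
    using D(2) by blast
  have hs: "(\<integral>\<^sup>+ z. ennreal (h z powr s) \<partial>M) < \<infinity>"
  proof -
    have "(\<integral>\<^sup>+ z. ennreal (h z powr s) \<partial>M) = (\<integral>\<^sup>+ z. ennreal (\<bar>g z\<bar> powr p) * indicator L z \<partial>M)"
    proof (rule nn_integral_cong)
      fix z
      have "(\<bar>g z\<bar> powr q) powr s = \<bar>g z\<bar> powr p" unfolding s_def using q1 by (simp add: powr_powr)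
      then show "ennreal (h z powr s) = ennreal (\<bar>g z\<bar> powr p) * indicator L z"
        unfolding h_def f_def by (simp add: indicator_def)
    qed
    also have "\<dots> < \<infinity>" using gL unfolding Lp_loc_def L_def by simp
    finally show ?thesis .
  qed
  define H where "H = maxf M h C0"
  define F where "F y = (\<integral>\<^sup>+ t. (if 0 < t \<and> ennreal t < H y then ennreal (s * t powr (s-1)) else 0) \<partial>lborel)" for y
  have Ffin: "(\<integral>\<^sup>+ y. F y \<partial>M) < \<infinity>"
    unfolding F_def H_def by (rule maxf_strong[OF mm D(1) dbl hm hnn s1 hs])
  have GH: "G y \<le> H y" if y: "y \<in> K" for y
    unfolding G_def maxf_def
  proof (rule SUP_least)
    fix pr assume pr: "pr \<in> {pr. fst pr \<in> UNIV \<and> 0 < snd pr \<and> snd pr \<le> 1 \<and> y \<in> ball (fst pr) (snd pr)}"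
    obtain c r where cr: "pr = (c,r)" by (cases pr)
    have r: "0 < r" "r \<le> 1" "dist c y < r" using pr cr by auto
    have day: "dist a y \<le> \<rho>" using a y by auto
    have c: "c \<in> C0" unfolding C0_def using dist_triangle[of a c y] r day by (simp add: dist_commute)
    have "avgN M f c r = avgN M h c r"
      unfolding avgN_def
    proof -
      have "(\<integral>\<^sup>+ z. ennreal (f z) * indicator (ball c r) z \<partial>M) = (\<integral>\<^sup>+ z. ennreal (h z) * indicator (ball c r) z \<partial>M)"
      proof (rule nn_integral_cong)
        fix z
        show "ennreal (f z) * indicator (ball c r) z = ennreal (h z) * indicator (ball c r) z"
        proof (cases "z \<in> ball c r")
          case True
          then have "dist c z < r" by simp
          then have "z \<in> L" unfolding L_def using dist_triangle[of a z c] c unfolding C0_def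
            using r by (simp add: dist_commute)
          then show ?thesis unfolding h_def by simp
        qed simp
      qed
      then show "(\<integral>\<^sup>+ z. ennreal (f z) * indicator (ball c r) z \<partial>M) * ennreal (1 / measure M (ball c r)) =
        (\<integral>\<^sup>+ z. ennreal (h z) * indicator (ball c r) z \<partial>M) * ennreal (1 / measure M (ball c r))" by simp
    qed
    also have "\<dots> \<le> maxf M h C0 y" by (rule maxf_ge[OF c r(1,2)]) (use r in simp)
    finally show "avgN M f (fst pr) (snd pr) \<le> H y" unfolding H_def cr by simp
  qed
  have pt: "ennreal (enn2real (G y) powr s) * indicator K y \<le> F y" for y
  proof (cases "y \<in> K")
    case True
    define b where "b = enn2real (G y)"
    have b0: "0 \<le> b" unfolding b_def by simp
    have "ennreal (b powr s) = (\<integral>\<^sup>+ t. ennreal (s * t powr (s-1)) * indicator {0<..<b} t \<partial>lborel)"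
      using int_pow_s[OF b0] s1 by simp
    also have "\<dots> \<le> F y" unfolding F_def
    proof (rule nn_integral_mono)
      fix t
      show "ennreal (s * t powr (s-1)) * indicator {0<..<b} t \<le> (if 0 < t \<and> ennreal t < H y then ennreal (s * t powr (s-1)) else 0)"
      proof (cases "0 < t \<and> t < b")
        case True
        then have "G y \<noteq> \<infinity>" unfolding b_def by auto
        then have "G y = ennreal b" unfolding b_def by (cases "G y") auto
        then have "ennreal t < G y" using True by (simp add: ennreal_lessI)
        also have "G y \<le> H y" using GH[OF \<open>y \<in> K\<close>] .
        finally show ?thesis using True by simp
      qed (auto simp: indicator_def)
    qed
    finally show ?thesis using True unfolding b_def by simp
  qed simp
  have "(\<integral>\<^sup>+ y. ennreal (enn2real (G y) powr s) * indicator K y \<partial>M) \<le> (\<integral>\<^sup>+ y. F y \<partial>M)"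
    by (rule nn_integral_mono) (rule pt)
  also note Ffin
  finally show "(\<integral>\<^sup>+ y. ennreal (enn2real (maxf M (\<lambda>y. \<bar>g y\<bar> powr q) UNIV y) powr (p/q)) * indicator K y \<partial>M) < \<infinity>"
    unfolding G_def f_def s_def .
  interpret sigma_finite_measure lborel by (rule sigma_finite_lborel)
  have Hm[measurable]: "H \<in> borel_measurable M"
    unfolding H_def by (subst measurable_cong_sets[OF sM refl]) (rule maxf_meas)
  have Fm: "F \<in> borel_measurable M" unfolding F_def by measurable
  have "AE y in M. F y \<noteq> \<infinity>" using nn_integral_PInf_AE[OF Fm] Ffin by simp
  then show "AE y in M. y \<in> K \<longrightarrow> maxf M (\<lambda>y. \<bar>g y\<bar> powr q) UNIV y < \<infinity>"
  proof eventually_elim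
    case (elim y)
    show ?case
    proof
      assume yK: "y \<in> K"
      show "maxf M (\<lambda>y. \<bar>g y\<bar> powr q) UNIV y < \<infinity>"
      proof (rule ccontr)
        assume "\<not> maxf M (\<lambda>y. \<bar>g y\<bar> powr q) UNIV y < \<infinity>"
        then have nG: "\<not> G y < \<infinity>" unfolding G_def f_def by simp
        then have "G y = \<infinity>" by (metis infinity_ennreal_def less_top)
        then have Hinf: "H y = \<infinity>" using GH[OF yK] by (metis infinity_ennreal_def top_unique)
        obtain c where c: "F y = ennreal c" using elim by (cases "F y") auto
        define n where "n = real (nat \<lceil>c\<rceil> + 1)"
        have n1: "1 \<le> n" unfolding n_def by simp
        have n2: "c < n" unfolding n_def using real_nat_ceiling_ge[of c] by simp
        have "ennreal (n powr s) = (\<integral>\<^sup>+ t. ennreal (s * t powr (s-1)) * indicator {0<..<n} t \<partial>lborel)"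
          using int_pow_s[of n s] n1 s1 by simp
        also have "\<dots> \<le> F y" unfolding F_def
        proof (rule nn_integral_mono)
          fix t
          show "ennreal (s * t powr (s-1)) * indicator {0<..<n} t \<le> (if 0 < t \<and> ennreal t < H y then ennreal (s * t powr (s-1)) else 0)"
          proof (cases "0 < t \<and> t < n")
            case True then show ?thesis using Hinf by simp
          qed (auto simp: indicator_def)
        qed
        finally have A: "ennreal (n powr s) \<le> F y" .
        have "n \<le> n powr s" using le_powr_self[OF n1] s1 by simp
        then have "ennreal c < ennreal (n powr s)" using n1 n2 by (intro ennreal_lessI) auto
        then show False using A c by simp
      qed
    qed
  qed
qed



theorem lemma3p2:
  fixes M :: "'a::heine_borel measure" and p q \<tau> :: real and g :: "'a \<Rightarrow> real"
  assumes "mm_space M" and "locally_doubling M"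
    and "1 \<le> q" and "q < p" and "0 < \<tau>" and "\<tau> \<le> 1"
    and "Lp_loc M p g"
  shows "\<exists>g'. g' \<in> borel_measurable borel \<and> Lp_loc M (p / q) g' \<and>
    (\<forall>K. compact K \<longrightarrow> (\<exists>C\<ge>1. \<exists>R>0. \<forall>x\<in>K. \<forall>r. 0 < r \<and> r < R \<longrightarrow>
       avg M (ball x r) (\<lambda>y. \<bar>g y\<bar> powr q) \<le> C * avg M (ball x (\<tau> * r)) g'))"
proof -
  note mm = assms(1) and ld = assms(2) and q1 = assms(3) and qp = assms(4)
    and tau = assms(5,6) and gL = assms(7)
  define s where "s = p/q"
  have s1: "1 < s" unfolding s_def using q1 qp by simp
  have sM: "sets M = sets borel" and spM: "space M = UNIV" using mm_sets[OF mm] by auto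
  define f where "f = (\<lambda>y. \<bar>g y\<bar> powr q)"
  have gm[measurable]: "g \<in> borel_measurable M" using gL unfolding Lp_loc_def by simp
  have fm[measurable]: "f \<in> borel_measurable M" unfolding f_def by measurable
  define G where "G = maxf M f UNIV"
  have Gb[measurable]: "G \<in> borel_measurable borel" unfolding G_def by (rule maxf_meas)
  have GM[measurable]: "G \<in> borel_measurable M" by (subst measurable_cong_sets[OF sM refl]) (rule Gb)
  define g' where "g' y = enn2real (G y)" for y
  have g'b: "g' \<in> borel_measurable borel" unfolding g'_def by measurable
  have g'M[measurable]: "g' \<in> borel_measurable M" unfolding g'_def by measurable
  have g'nn: "0 \<le> g' y" for y unfolding g'_def by simp
  have locI: "(\<integral>\<^sup>+ y. ennreal (\<bar>g' y\<bar> powr s) * indicator K y \<partial>M) < \<infinity>" if "compact K" for K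
    using loc(1)[OF mm ld q1 qp gL that] unfolding g'_def G_def f_def s_def by simp
  have locAE: "AE y in M. y \<in> K \<longrightarrow> G y < \<infinity>" if "compact K" for K
    using loc(2)[OF mm ld q1 qp gL that] unfolding G_def f_def .
  have ineq: "avg M (ball x r) f \<le> avg M (ball x (\<tau> * r)) g'" if r: "0 < r" "r < 1" for x r
  proof -
    define B where "B = ball x r"
    define B' where "B' = ball x (\<tau> * r)"
    have tr: "0 < \<tau> * r" using tau r by simp
    have BB': "B' \<subseteq> B" unfolding B_def B'_def using tau r by (intro subset_ball) (simp add: mult_le_cancel_right1)
    define m where "m = measure M B"
    define m' where "m' = measure M B'"
    have m: "0 < m" "emeasure M B = ennreal m" using mm_ball_pos[OF mm r(1)] unfolding m_def B_def by auto
    have m': "0 < m'" "emeasure M B' = ennreal m'" using mm_ball_pos[OF mm tr] unfolding m'_def B'_def by auto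
    have BM[measurable]: "B \<in> sets M" "B' \<in> sets M" unfolding B_def B'_def by (simp_all add: sM)
    define I where "I = (\<integral>\<^sup>+ z. ennreal (f z) * indicator B z \<partial>M)"
    define av where "av = avg M B f"
    have av: "av = (1/m) * enn2real I"
    proof -
      have "(LINT y:B|M. f y) = integral\<^sup>L M (\<lambda>y. indicator B y *\<^sub>R f y)"
        by (simp add: set_lebesgue_integral_def)
      also have "\<dots> = enn2real (\<integral>\<^sup>+ y. ennreal (indicator B y *\<^sub>R f y) \<partial>M)"
        by (rule integral_eq_nn_integral) (auto simp: f_def)
      also have "(\<integral>\<^sup>+ y. ennreal (indicator B y *\<^sub>R f y) \<partial>M) = I"
        unfolding I_def by (intro nn_integral_cong) (simp add: indicator_def)
      finally show ?thesis unfolding av_def avg_def m_def by simp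
    qed
    have av0: "0 \<le> av" unfolding av using m(1) by simp
    have AEle: "AE y in M. y \<in> B' \<longrightarrow> av \<le> g' y"
      using locAE[of "cball x (\<tau> * r)", OF compact_cball]
    proof eventually_elim
      case (elim y)
      show ?case
      proof
        assume yB': "y \<in> B'"
        then have Gfin: "G y < \<infinity>" using elim unfolding B'_def by auto
        show "av \<le> g' y"
        proof (cases "I = \<infinity>")
          case True then show ?thesis unfolding av using g'nn by simp
        next
          case False
          have "avgN M f x r \<le> G y" unfolding G_def
            by (rule maxf_ge) (use r yB' BB' in \<open>auto simp: B_def\<close>)
          then have "enn2real (avgN M f x r) \<le> g' y" unfolding g'_def
            using Gfin by (intro enn2real_mono) auto
          moreover have "enn2real (avgN M f x r) = av"
            unfolding avgN_def av I_def[symmetric] B_def[symmetric] m_def[symmetric]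
            using m(1) by (simp add: enn2real_mult)
          ultimately show ?thesis by simp
        qed
      qed
    qed
    define J where "J = (\<integral>\<^sup>+ y. ennreal (g' y) * indicator B' y \<partial>M)"
    have Jge: "ennreal (av * m') \<le> J"
    proof -
      have "ennreal (av * m') = (\<integral>\<^sup>+ y. ennreal av * indicator B' y \<partial>M)"
        using m'(2) av0 m'(1) by (simp add: nn_integral_cmult_indicator ennreal_mult)
      also have "\<dots> \<le> J" unfolding J_def
        by (rule nn_integral_mono_AE) (use AEle in \<open>eventually_elim, auto simp: indicator_def intro: ennreal_leI\<close>)
      finally show ?thesis .
    qed
    have Jfin: "J < \<infinity>"
    proof -
      define K' where "K' = cball x (\<tau> * r)"
      have K'M[measurable]: "K' \<in> sets M" unfolding K'_def by (simp add: sM)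
      have "J \<le> (\<integral>\<^sup>+ y. indicator K' y + ennreal (\<bar>g' y\<bar> powr s) * indicator K' y \<partial>M)"
        unfolding J_def
      proof (rule nn_integral_mono)
        fix y
        have "ennreal (g' y) \<le> 1 + ennreal (\<bar>g' y\<bar> powr s)"
        proof (cases "g' y \<le> 1")
          case True
          then have "ennreal (g' y) \<le> 1" by (simp add: ennreal_leI)
          then show ?thesis by (simp add: add_increasing2)
        next
          case False
          then have "g' y \<le> \<bar>g' y\<bar> powr s" using le_powr_self[of "g' y" s] s1 g'nn[of y] by simp
          then have "ennreal (g' y) \<le> ennreal (\<bar>g' y\<bar> powr s)" by (rule ennreal_leI)
          then show ?thesis by (simp add: add_increasing)
        qed
        moreover have "y \<in> B' \<Longrightarrow> y \<in> K'" unfolding B'_def K'_def by simp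
        ultimately show "ennreal (g' y) * indicator B' y \<le> indicator K' y + ennreal (\<bar>g' y\<bar> powr s) * indicator K' y"
          by (auto simp: indicator_def)
      qed
      also have "\<dots> = emeasure M K' + (\<integral>\<^sup>+ y. ennreal (\<bar>g' y\<bar> powr s) * indicator K' y \<partial>M)"
        by (subst nn_integral_add) auto
      also have "\<dots> < \<infinity>"
      proof -
        have "emeasure M K' \<le> emeasure M (ball x (\<tau> * r + 1))"
          by (rule emeasure_mono) (auto simp: K'_def sM)
        also have "\<dots> < \<infinity>" using mm_ball_pos(2)[OF mm, of "\<tau> * r + 1" x] tr by simp
        finally have "emeasure M K' < \<infinity>" .
        moreover have "(\<integral>\<^sup>+ y. ennreal (\<bar>g' y\<bar> powr s) * indicator K' y \<partial>M) < \<infinity>"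
          by (rule locI) (simp add: K'_def)
        ultimately show ?thesis by (simp add: ennreal_add_eq_top less_top)
      qed
      finally show ?thesis .
    qed
    have "(LINT y:B'|M. g' y) = integral\<^sup>L M (\<lambda>y. indicator B' y *\<^sub>R g' y)"
      by (simp add: set_lebesgue_integral_def)
    also have "\<dots> = enn2real (\<integral>\<^sup>+ y. ennreal (indicator B' y *\<^sub>R g' y) \<partial>M)"
      by (rule integral_eq_nn_integral) (auto simp: g'nn)
    also have "(\<integral>\<^sup>+ y. ennreal (indicator B' y *\<^sub>R g' y) \<partial>M) = J"
      unfolding J_def by (intro nn_integral_cong) (simp add: indicator_def)
    finally have lint: "(LINT y:B'|M. g' y) = enn2real J" .
    have "av * m' \<le> enn2real J"
      using enn2real_mono[OF Jge Jfin[unfolded infinity_ennreal_def]] av0 m'(1) by simp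
    then have "av \<le> (1/m') * enn2real J" using m'(1) by (simp add: field_simps)
    then show ?thesis unfolding av_def avg_def lint[symmetric] B_def B'_def m'_def by simp
  qed
  show ?thesis
  proof (intro exI[of _ g'] conjI allI impI)
    show "g' \<in> borel_measurable borel" by (rule g'b)
    show "Lp_loc M (p / q) g'"
      unfolding Lp_loc_def using locI g'M unfolding s_def by simp
    fix K :: "'a set" assume "compact K"
    show "\<exists>C\<ge>1. \<exists>R>0. \<forall>x\<in>K. \<forall>r. 0 < r \<and> r < R \<longrightarrow>
       avg M (ball x r) (\<lambda>y. \<bar>g y\<bar> powr q) \<le> C * avg M (ball x (\<tau> * r)) g'"
      using ineq unfolding f_def by (intro exI[of _ 1] conjI) (auto intro!: exI[of _ "1::real"])
  qed
qed

end
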